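(* Let $f:\Omega_D\to\mathbb{O}$ be the $O(3)$-slice function induced by an $O(3)$-stem function $\mathcal F:E\to\mathbb{O}^4$ of class $C^1$. Then $f$ is slice Fueter-regular if and only if there exists at least one $\mathbb{I}=(I,J)\in\mathcal N$ such that $\overline{\mathcal D}_{\mathbb I}f=0$ on $\Omega_{\mathbb I}$.
   Context: Octonions $\mathbb{O}=\mathbb{H}+\ell\mathbb{H}$ (product $(a+\ell b)(c+\ell d)=(ac-d\bar b)+\ell(\bar a d+cb)$), identified with $\mathbb{R}^8$; $\mathbb{S}=\{I:I^2=-1\}$. $D\subset\mathbb{R}^2$ non-empty open, invariant under $(x_0,x_1)\mapsto(x_0,-x_1)$, $\Omega_D=\{x_0+x_1I:(x_0,x_1)\in D,I\in\mathbb{S}\}$, assumed connected; $E=\{(x_0,\dots,x_3)\in\mathbb{R}^4:(x_0,(x_1^2+x_2^2+x_3^2)^{1/2})\in D\}$. $O(3)$: real orthogonal $4\times4$ matrices fixing the first basis vector, acting on $\mathbb{R}^4$, $\mathbb{O}^4$ by matrix–column multiplication. $\mathcal N=\{(I,J)\in\mathbb{S}^2:I\perp J\}$. An $O(3)$-stem function is $\mathcal F=(\mathcal F_0,\dots,\mathcal F_3):E\to\mathbb{O}^4$ with $\mathcal F(Av)=A\mathcal F(v)$; it induces the well-defined function $f(x_0+x_1I+x_2J+x_3(IJ))=\mathcal F_0(v)+I\mathcal F_1(v)+J\mathcal F_2(v)+(IJ)\mathcal F_3(v)$ ($v=(x_0,\dots,x_3)\in E$, $(I,J)\in\mathcal N$).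 $f$ is slice Fueter-regular if it is induced by such an $\mathcal F$ of class $C^1$ satisfying on $E$: $\partial_0\mathcal F_0-\partial_1\mathcal F_1-\partial_2\mathcal F_2-\partial_3\mathcal F_3=0$, $\partial_1\mathcal F_0+\partial_0\mathcal F_1-\partial_3\mathcal F_2+\partial_2\mathcal F_3=0$, $\partial_2\mathcal F_0+\partial_3\mathcal F_1+\partial_0\mathcal F_2-\partial_1\mathcal F_3=0$, $\partial_3\mathcal F_0-\partial_2\mathcal F_1+\partial_1\mathcal F_2+\partial_0\mathcal F_3=0$. For $\mathbb I=(I,J)\in\mathcal N$: $\mathbb{H}_{\mathbb I}=\mathrm{Span}_{\mathbb{R}}(1,I,J,IJ)$, $\Omega_{\mathbb I}=\Omega_D\cap\mathbb{H}_{\mathbb I}$, $f_{\mathbb I}(v)=f(x_0+x_1I+x_2J+x_3IJ)$ for $v\in E$, and $\overline{\mathcal D}_{\mathbb I}f(x)=\frac{\partial f_{\mathbb I}}{\partial x_0}(v)+I\frac{\partial f_{\mathbb I}}{\partial x_1}(v)+J\frac{\partial f_{\mathbb I}}{\partial x_2}(v)+(IJ)\frac{\partial f_{\mathbb I}}{\partial x_3}(v)$ where $x=x_0+x_1I+x_2J+x_3IJ$. *)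

theory Defs
  imports "HOL-Analysis.Analysis"
begin

text \<open>Quaternions are modelled as real^4 with coordinates (index 0,1,2,3) w.r.t. the
  basis 1, i, j, k; octonions O = H + l H as pairs of quaternions, so that O is
  identified with R^8 = R^4 x R^4 (Euclidean structure of the product type).\<close>

type_synonym quat = "real ^ 4"
type_synonym oct = "quat \<times> quat"

definition qmk :: "real \<Rightarrow> real \<Rightarrow> real \<Rightarrow> real \<Rightarrow> quat" where
  "qmk a b c d = (\<chi> i. if i = 0 then a else if i = 1 then b else if i = 2 then c else d)"

definition qmult :: "quat \<Rightarrow> quat \<Rightarrow> quat" where
  "qmult a b = qmk
     (a$0*b$0 - a$1*b$1 - a$2*b$2 - a$3*b$3)
     (a$0*b$1 + a$1*b$0 + a$2*b$3 - a$3*b$2)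
     (a$0*b$2 - a$1*b$3 + a$2*b$0 + a$3*b$1)
     (a$0*b$3 + a$1*b$2 - a$2*b$1 + a$3*b$0)"

definition qconj :: "quat \<Rightarrow> quat" where
  "qconj a = qmk (a$0) (- a$1) (- a$2) (- a$3)"

text \<open>(a + l b)(c + l d) = (a c - d conj(b)) + l (conj(a) d + c b)\<close>
definition omult :: "oct \<Rightarrow> oct \<Rightarrow> oct" where
  "omult x y = (case x of (a, b) \<Rightarrow> case y of (c, d) \<Rightarrow>
      (qmult a c - qmult d (qconj b), qmult (qconj a) d + qmult c b))"

definition oone :: oct where
  "oone = (qmk 1 0 0 0, 0)"

definition Sph :: "oct set" where
  "Sph = {I. omult I I = - oone}"

definition Nset :: "(oct \<times> oct) set" where
  "Nset = {(I, J). I \<in> Sph \<and> J \<in> Sph \<and> inner I J = 0}"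

definition OmegaD :: "(real \<times> real) set \<Rightarrow> oct set" where
  "OmegaD D = {x0 *\<^sub>R oone + x1 *\<^sub>R I | x0 x1 I. (x0, x1) \<in> D \<and> I \<in> Sph}"

definition Eset :: "(real \<times> real) set \<Rightarrow> (real ^ 4) set" where
  "Eset D = {v. (v$0, sqrt ((v$1)\<^sup>2 + (v$2)\<^sup>2 + (v$3)\<^sup>2)) \<in> D}"

definition opoint :: "oct \<Rightarrow> oct \<Rightarrow> real ^ 4 \<Rightarrow> oct" where
  "opoint I J v = v$0 *\<^sub>R oone + v$1 *\<^sub>R I + v$2 *\<^sub>R J + v$3 *\<^sub>R omult I J"

definition O3 :: "(real ^ 4 ^ 4) set" where
  "O3 = {A. orthogonal_matrix A \<and> A *v axis 0 1 = axis 0 1}"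

definition o3_stem :: "(real \<times> real) set \<Rightarrow> (4 \<Rightarrow> real ^ 4 \<Rightarrow> oct) \<Rightarrow> bool" where
  "o3_stem D F \<longleftrightarrow> (\<forall>A \<in> O3. \<forall>v \<in> Eset D. \<forall>i.
       F i (A *v v) = (\<Sum>j\<in>UNIV. (A $ i $ j) *\<^sub>R F j v))"

definition C1_on :: "(real ^ 4) set \<Rightarrow> (real ^ 4 \<Rightarrow> oct) \<Rightarrow> bool" where
  "C1_on S g \<longleftrightarrow> (\<exists>g'. (\<forall>v \<in> S. (g has_derivative blinfun_apply (g' v)) (at v))
                        \<and> continuous_on S g')"

definition stem_C1 :: "(real \<times> real) set \<Rightarrow> (4 \<Rightarrow> real ^ 4 \<Rightarrow> oct) \<Rightarrow> bool" where
  "stem_C1 D F \<longleftrightarrow> (\<forall>i. C1_on (Eset D) (F i))"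

definition induces :: "(real \<times> real) set \<Rightarrow> (4 \<Rightarrow> real ^ 4 \<Rightarrow> oct) \<Rightarrow> (oct \<Rightarrow> oct) \<Rightarrow> bool" where
  "induces D F f \<longleftrightarrow> (\<forall>(I, J) \<in> Nset. \<forall>v \<in> Eset D.
      f (opoint I J v) = F 0 v + omult I (F 1 v) + omult J (F 2 v) + omult (omult I J) (F 3 v))"

definition pder :: "(real ^ 4 \<Rightarrow> oct) \<Rightarrow> 4 \<Rightarrow> real ^ 4 \<Rightarrow> oct" where
  "pder g k v = vector_derivative (\<lambda>t. g (v + t *\<^sub>R axis k 1)) (at 0)"

definition fueter_system :: "(real \<times> real) set \<Rightarrow> (4 \<Rightarrow> real ^ 4 \<Rightarrow> oct) \<Rightarrow> bool" where
  "fueter_system D F \<longleftrightarrow> (\<forall>v \<in> Eset D.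
      pder (F 0) 0 v - pder (F 1) 1 v - pder (F 2) 2 v - pder (F 3) 3 v = 0 \<and>
      pder (F 0) 1 v + pder (F 1) 0 v - pder (F 2) 3 v + pder (F 3) 2 v = 0 \<and>
      pder (F 0) 2 v + pder (F 1) 3 v + pder (F 2) 0 v - pder (F 3) 1 v = 0 \<and>
      pder (F 0) 3 v - pder (F 1) 2 v + pder (F 2) 1 v + pder (F 3) 0 v = 0)"

definition slice_fueter_regular :: "(real \<times> real) set \<Rightarrow> (oct \<Rightarrow> oct) \<Rightarrow> bool" where
  "slice_fueter_regular D f \<longleftrightarrow>
     (\<exists>G. o3_stem D G \<and> stem_C1 D G \<and> induces D G f \<and> fueter_system D G)"

definition fI :: "(oct \<Rightarrow> oct) \<Rightarrow> oct \<Rightarrow> oct \<Rightarrow> real ^ 4 \<Rightarrow> oct" where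
  "fI f I J v = f (opoint I J v)"

definition DbarI :: "(oct \<Rightarrow> oct) \<Rightarrow> oct \<Rightarrow> oct \<Rightarrow> real ^ 4 \<Rightarrow> oct" where
  "DbarI f I J v = pder (fI f I J) 0 v + omult I (pder (fI f I J) 1 v)
     + omult J (pder (fI f I J) 2 v) + omult (omult I J) (pder (fI f I J) 3 v)"

text \<open>Omega_I = Omega_D intersected with H_I.\<close>
definition HI :: "oct \<Rightarrow> oct \<Rightarrow> oct set" where
  "HI I J = span {oone, I, J, omult I J}"

end

theory Submission
  imports Defs
begin

lemma num4_distinct[simp]: "(0::4) \<noteq> 1" "(0::4) \<noteq> 2" "(0::4) \<noteq> 3" "(1::4) \<noteq> 2" "(1::4) \<noteq> 3" "(2::4) \<noteq> 3"
  "(1::4) \<noteq> 0" "(2::4) \<noteq> 0" "(3::4) \<noteq> 0" "(2::4) \<noteq> 1" "(3::4) \<noteq> 1" "(3::4) \<noteq> 2"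
  by simp_all

lemma four0: "(4::4) = 0" by simp
lemma UNIV4: "(UNIV::4 set) = {0,1,2,3}"
  using UNIV_4 unfolding four0 by auto
lemma all4: "(\<forall>i::4. P i) \<longleftrightarrow> P 0 \<and> P 1 \<and> P 2 \<and> P 3"
proof
  assume "\<forall>i. P i" thus "P 0 \<and> P 1 \<and> P 2 \<and> P 3" by blast
next
  assume h: "P 0 \<and> P 1 \<and> P 2 \<and> P 3"
  show "\<forall>i. P i"
  proof
    fix i :: 4
    have "i \<in> {0,1,2,3}" using UNIV4 by blast
    hence "i = 0 \<or> i = 1 \<or> i = 2 \<or> i = 3" by blast
    thus "P i" using h by (elim disjE) simp_all
  qed
qed
lemma sum4: "sum f (UNIV::4 set) = f 0 + f 1 + f 2 + f 3"
  unfolding UNIV4 by (simp add: add.assoc)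

lemma qmk_nth[simp]: "qmk a b c d $ 0 = a" "qmk a b c d $ 1 = b" "qmk a b c d $ 2 = c" "qmk a b c d $ 3 = d"
  by (simp_all add: qmk_def)

lemma quat_eq: "(x::quat) = y \<longleftrightarrow> x$0 = y$0 \<and> x$1 = y$1 \<and> x$2 = y$2 \<and> x$3 = y$3"
  by (simp only: vec_eq_iff all4)

lemma omult_alt: "omult x y = (qmult (fst x) (fst y) - qmult (snd y) (qconj (snd x)),
   qmult (qconj (fst x)) (snd y) + qmult (fst y) (snd x))"
  by (simp add: omult_def split: prod.splits)

lemma oct_eq: "(x::oct) = y \<longleftrightarrow> fst x$0 = fst y$0 \<and> fst x$1 = fst y$1 \<and> fst x$2 = fst y$2 \<and> fst x$3 = fst y$3
   \<and> snd x$0 = snd y$0 \<and> snd x$1 = snd y$1 \<and> snd x$2 = snd y$2 \<and> snd x$3 = snd y$3"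
  by (simp only: prod_eq_iff quat_eq conj_assoc)

lemmas oexp = omult_alt qmult_def qconj_def oone_def oct_eq

lemma omult_add_right: "omult x (y + z) = omult x y + omult x z"
  by (simp add: oexp algebra_simps)
lemma omult_add_left: "omult (x + y) z = omult x z + omult y z"
  by (simp add: oexp algebra_simps)
lemma omult_scale_right: "omult x (c *\<^sub>R y) = c *\<^sub>R omult x y"
  by (simp add: oexp algebra_simps)
lemma omult_scale_left: "omult (c *\<^sub>R x) y = c *\<^sub>R omult x y"
  by (simp add: oexp algebra_simps)
lemma omult_left_alt: "omult a (omult a x) = omult (omult a a) x"
  by (simp add: oexp algebra_simps)
lemma omult_right_alt: "omult (omult x a) a = omult x (omult a a)"
  by (simp add: oexp algebra_simps)
lemma omult_one_left[simp]: "omult oone x = x"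
  by (simp add: oexp algebra_simps)
lemma omult_one_right[simp]: "omult x oone = x"
  by (simp add: oexp algebra_simps)

lemma omult_minus_right: "omult x (- y) = - omult x y"
  by (simp add: oexp algebra_simps)
lemma omult_minus_left: "omult (- x) y = - omult x y"
  by (simp add: oexp algebra_simps)
lemma omult_diff_right: "omult x (y - z) = omult x y - omult x z"
  by (simp add: oexp algebra_simps)
lemma omult_diff_left: "omult (x - y) z = omult x z - omult y z"
  by (simp add: oexp algebra_simps)
lemma omult_zero[simp]: "omult x 0 = 0" "omult 0 x = 0"
  by (simp_all add: oexp algebra_simps)

lemmas olin = omult_add_right omult_add_left omult_scale_right omult_scale_left
  omult_minus_right omult_minus_left omult_diff_right omult_diff_left

definition re :: "oct \<Rightarrow> real" where "re x = fst x $ 0"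

lemma inner_oct: "inner (x::oct) y = fst x$0* fst y$0 + fst x$1* fst y$1 + fst x$2* fst y$2 + fst x$3* fst y$3
  + snd x$0* snd y$0 + snd x$1* snd y$1 + snd x$2* snd y$2 + snd x$3* snd y$3"
  by (simp add: inner_prod_def inner_vec_def sum4)

lemma sph_re: assumes "I \<in> Sph" shows "re I = 0"
proof -
  have e: "omult I I = - oone" using assms by (simp add: Sph_def)
  define a0 where "a0 = fst I $ 0"
  define a1 where "a1 = fst I $ 1"
  define a2 where "a2 = fst I $ 2"
  define a3 where "a3 = fst I $ 3"
  define b0 where "b0 = snd I $ 0"
  define b1 where "b1 = snd I $ 1"
  define b2 where "b2 = snd I $ 2"
  define b3 where "b3 = snd I $ 3"
  from e have h: "a0*a0 - a1*a1 - a2*a2 - a3*a3 - (b0*b0+b1*b1+b2*b2+b3*b3) = -1"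
    "a0*a1 + a1*a0 = 0" "a0*a2+a2*a0 = 0" "a0*a3+a3*a0=0"
    "a0*b0 + b0*a0 = 0" "a0*b1+b1*a0 = 0" "a0*b2+b2*a0 = 0" "a0*b3+b3*a0=0"
    unfolding a0_def a1_def a2_def a3_def b0_def b1_def b2_def b3_def
    by (simp_all add: oexp algebra_simps)
  have "a0 = 0"
  proof (rule ccontr)
    assume "a0 \<noteq> 0"
    with h have "a1 = 0" "a2 = 0" "a3 = 0" "b0 = 0" "b1 = 0" "b2 = 0" "b3 = 0" by simp_all
    with h(1) have "a0*a0 = -1" by simp
    moreover have "a0*a0 \<ge> 0" by simp
    ultimately show False by simp
  qed
  thus ?thesis by (simp add: re_def a0_def)
qed

lemma imag_sq: "re x = 0 \<Longrightarrow> omult x x = - (inner x x) *\<^sub>R oone"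
  by (simp add: re_def inner_oct oexp algebra_simps)

lemma imag_anti: "re x = 0 \<Longrightarrow> re y = 0 \<Longrightarrow> omult x y + omult y x = - (2 * inner x y) *\<^sub>R oone"
  by (simp add: re_def inner_oct oexp algebra_simps)

lemma re_mult: "re x = 0 \<Longrightarrow> re y = 0 \<Longrightarrow> re (omult x y) = - inner x y"
  by (simp add: re_def inner_oct oexp algebra_simps)

lemma lin_alt: "omult a (omult b x) + omult b (omult a x) = omult (omult a b + omult b a) x"
  by (simp add: oexp algebra_simps)

lemma re_oone[simp]: "re oone = 1" by (simp add: re_def oone_def)
lemma re_lin[simp]: "re (x + y) = re x + re y" "re (c *\<^sub>R x) = c * re x" "re (x - y) = re x - re y" "re (- x) = - re x"
  by (simp_all add: re_def)

lemma sph_inner: assumes "I \<in> Sph" shows "inner I I = 1"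
proof -
  have "omult I I = - oone" using assms by (simp add: Sph_def)
  moreover have "omult I I = - (inner I I) *\<^sub>R oone" using imag_sq sph_re assms by blast
  ultimately have "(inner I I) *\<^sub>R oone = 1 *\<^sub>R oone" by simp
  moreover have "oone \<noteq> 0" by (simp add: oone_def oct_eq)
  ultimately show ?thesis by (metis scaleR_cancel_right)
qed

lemma sph_iff: "I \<in> Sph \<longleftrightarrow> re I = 0 \<and> inner I I = 1"
proof
  assume "I \<in> Sph" thus "re I = 0 \<and> inner I I = 1" using sph_re sph_inner by blast
next
  assume h: "re I = 0 \<and> inner I I = 1"
  thus "I \<in> Sph" using imag_sq[of I] by (simp add: Sph_def)
qed

lemma sph_sq: "I \<in> Sph \<Longrightarrow> omult I (omult I x) = - x"
  by (simp add: omult_left_alt Sph_def olin)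

lemma sph_sq': "I \<in> Sph \<Longrightarrow> omult (omult x I) I = - x"
  by (simp add: omult_right_alt Sph_def olin)

locale nI =
  fixes I J :: oct
  assumes N: "(I, J) \<in> Nset"
begin

definition K where "K = omult I J"

lemma I: "I \<in> Sph" and J: "J \<in> Sph" and IJ0: "inner I J = 0"
  using N by (auto simp: Nset_def)

lemma reI: "re I = 0" and reJ: "re J = 0" using I J sph_re by auto

lemma IJanti: "omult I J + omult J I = 0"
  using imag_anti[OF reI reJ] IJ0 by simp

lemma reK: "re K = 0" using re_mult[OF reI reJ] IJ0 by (simp add: K_def)

lemma K: "K \<in> Sph"
proof -
  have a: "omult K J = - I" unfolding K_def using sph_sq'[OF J] .
  have b: "omult I K = - J" unfolding K_def using sph_sq[OF I] .
  have c: "omult J I = - K" using IJanti by (simp add: K_def eq_neg_iff_add_eq_0 add.commute)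
  have d: "omult K I = J" using c sph_sq'[OF I, of J] by (simp add: olin)
  have "omult K (omult I J) + omult I (omult K J) = omult (omult K I + omult I K) J" by (rule lin_alt)
  hence "omult K K + oone = 0" using a b d I by (simp add: K_def[symmetric] olin Sph_def)
  thus ?thesis by (simp add: Sph_def eq_neg_iff_add_eq_0)
qed

lemma IK: "omult I K = - J" unfolding K_def using sph_sq[OF I] .
lemma KJ: "omult K J = - I" unfolding K_def using sph_sq'[OF J] .
lemma JI: "omult J I = - K" using IJanti by (simp add: K_def eq_neg_iff_add_eq_0 add.commute)

lemma IKanti: "omult I K + omult K I = 0"
proof -
  have "re (omult I K) = 0" using IK reJ by simp
  hence "inner I K = 0" using re_mult[OF reI reK] by simp
  thus ?thesis using imag_anti[OF reI reK] by simp
qed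

lemma JKanti: "omult J K + omult K J = 0"
proof -
  have "re (omult K J) = 0" using KJ reI by simp
  hence "inner K J = 0" using re_mult[OF reK reJ] by simp
  thus ?thesis using imag_anti[OF reJ reK] by (simp add: inner_commute)
qed

lemma IK0: "inner I K = 0"
proof -
  have "re (omult I K) = 0" using IK reJ by simp
  thus "inner I K = 0" using re_mult[OF reI reK] by simp
qed
lemma JK0: "inner J K = 0"
proof -
  have "re (omult K J) = 0" using KJ reI by simp
  thus ?thesis using re_mult[OF reK reJ] by (simp add: inner_commute)
qed

lemma Q_sq: "omult (a *\<^sub>R I + b *\<^sub>R J + c *\<^sub>R K) (a *\<^sub>R I + b *\<^sub>R J + c *\<^sub>R K)
   = - (a*a + b*b + c*c) *\<^sub>R oone"
proof -
  have "re (a *\<^sub>R I + b *\<^sub>R J + c *\<^sub>R K) = 0" using reI reJ reK by simp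
  moreover have "inner (a *\<^sub>R I + b *\<^sub>R J + c *\<^sub>R K) (a *\<^sub>R I + b *\<^sub>R J + c *\<^sub>R K) = a*a + b*b + c*c"
    using sph_inner[OF I] sph_inner[OF J] sph_inner[OF K] IJ0 IK0 JK0
    by (simp add: inner_add_left inner_add_right inner_commute algebra_simps)
  ultimately show ?thesis using imag_sq by metis
qed

lemma opoint_K: "opoint I J v = v$0 *\<^sub>R oone + (v$1 *\<^sub>R I + v$2 *\<^sub>R J + v$3 *\<^sub>R K)"
  by (simp add: opoint_def K_def algebra_simps)

lemma opoint_Omega:
  assumes sym: "\<forall>x0 x1. (x0, x1) \<in> D \<longrightarrow> (x0, - x1) \<in> D"
  shows "opoint I J v \<in> OmegaD D \<longleftrightarrow> v \<in> Eset D"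
proof
  assume "opoint I J v \<in> OmegaD D"
  then obtain x0 x1 L where xD: "(x0, x1) \<in> D" and L: "L \<in> Sph"
    and eq: "opoint I J v = x0 *\<^sub>R oone + x1 *\<^sub>R L" by (auto simp: OmegaD_def)
  have "re (opoint I J v) = v$0" using reI reJ reK by (simp add: opoint_K)
  moreover have "re (x0 *\<^sub>R oone + x1 *\<^sub>R L) = x0" using sph_re[OF L] by simp
  ultimately have v0: "v$0 = x0" using eq by simp
  with eq have Q: "v$1 *\<^sub>R I + v$2 *\<^sub>R J + v$3 *\<^sub>R K = x1 *\<^sub>R L" by (simp add: opoint_K)
  have "- (v$1* v$1 + v$2* v$2 + v$3* v$3) *\<^sub>R oone = omult (x1 *\<^sub>R L) (x1 *\<^sub>R L)"
    using Q_sq Q by metis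
  also have "\<dots> = - (x1*x1) *\<^sub>R oone" using L by (simp add: olin Sph_def)
  finally have "re (- (v$1* v$1 + v$2* v$2 + v$3* v$3) *\<^sub>R oone) = re (- (x1*x1) *\<^sub>R oone)" by simp
  hence "(v$1)\<^sup>2 + (v$2)\<^sup>2 + (v$3)\<^sup>2 = x1\<^sup>2" by (simp add: power2_eq_square)
  hence "sqrt ((v$1)\<^sup>2 + (v$2)\<^sup>2 + (v$3)\<^sup>2) = \<bar>x1\<bar>" by simp
  moreover have "(x0, \<bar>x1\<bar>) \<in> D" using xD sym by (cases "x1 \<ge> 0") auto
  ultimately show "v \<in> Eset D" using v0 by (simp add: Eset_def)
next
  assume vE: "v \<in> Eset D"
  define r where "r = sqrt ((v$1)\<^sup>2 + (v$2)\<^sup>2 + (v$3)\<^sup>2)"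
  have rD: "(v$0, r) \<in> D" using vE by (simp add: Eset_def r_def)
  show "opoint I J v \<in> OmegaD D"
  proof (cases "r = 0")
    case True
    hence "(v$1)\<^sup>2 + (v$2)\<^sup>2 + (v$3)\<^sup>2 = 0" by (simp add: r_def)
    hence "v$1 = 0 \<and> v$2 = 0 \<and> v$3 = 0" by (smt (verit) power2_less_eq_zero_iff zero_le_power2)
    hence "opoint I J v = v$0 *\<^sub>R oone + r *\<^sub>R I" using True by (simp add: opoint_K)
    thus ?thesis using rD I unfolding OmegaD_def by blast
  next
    case False
    have "r \<ge> 0" unfolding r_def by simp
    hence rpos: "r > 0" using False by simp
    define L where "L = (v$1/r) *\<^sub>R I + (v$2/r) *\<^sub>R J + (v$3/r) *\<^sub>R K"
    have "omult L L = - ((v$1/r)*(v$1/r) + (v$2/r)*(v$2/r) + (v$3/r)*(v$3/r)) *\<^sub>R oone"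
      unfolding L_def by (rule Q_sq)
    also have "(v$1/r)*(v$1/r) + (v$2/r)*(v$2/r) + (v$3/r)*(v$3/r) = ((v$1)\<^sup>2 + (v$2)\<^sup>2 + (v$3)\<^sup>2) / r\<^sup>2"
      by (simp add: power2_eq_square add_divide_distrib)
    also have "\<dots> = 1" using rpos unfolding r_def
      by (metis add_nonneg_nonneg div_self real_sqrt_pow2 zero_le_power2 power2_eq_square mult_pos_pos r_def rpos less_irrefl)
    finally have L: "L \<in> Sph" by (simp add: Sph_def)
    have "opoint I J v = v$0 *\<^sub>R oone + r *\<^sub>R L" using rpos
      by (simp add: opoint_K L_def scaleR_add_right)
    thus ?thesis using rD L unfolding OmegaD_def by blast
  qed
qed

end


lemma open_E: assumes "open D" shows "open (Eset D)"
proof -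
  have "Eset D = (\<lambda>v::real^4. (v$0, sqrt ((v$1)\<^sup>2 + (v$2)\<^sup>2 + (v$3)\<^sup>2))) -` D"
    by (auto simp: Eset_def)
  also have "open \<dots>" by (intro open_vimage assms continuous_intros)
  finally show ?thesis .
qed

lemma line_deriv:
  assumes "(h has_derivative L) (at x)"
  shows "((\<lambda>t. h (x + t *\<^sub>R u)) has_vector_derivative L u) (at 0)"
proof -
  have l: "((\<lambda>t::real. x + t *\<^sub>R u) has_derivative (\<lambda>t. t *\<^sub>R u)) (at 0)"
    by (auto intro!: derivative_eq_intros)
  have "((h \<circ> (\<lambda>t::real. x + t *\<^sub>R u)) has_derivative (L \<circ> (\<lambda>t. t *\<^sub>R u))) (at 0)"
    by (rule diff_chain_at[OF l]) (simp add: assms)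
  moreover have "L \<circ> (\<lambda>t. t *\<^sub>R u) = (\<lambda>t. t *\<^sub>R L u)"
    using linear_scale[OF has_derivative_linear[OF assms]] by (auto simp: fun_eq_iff)
  ultimately show ?thesis by (simp add: has_vector_derivative_def comp_def)
qed

lemma pder_eq: "(h has_derivative L) (at x) \<Longrightarrow> pder h k x = L (axis k 1)"
  unfolding pder_def by (rule vector_derivative_at, rule line_deriv)

lemma linear_omult: "linear (omult a)"
  by (rule linearI) (simp_all add: olin)

lemma bl_omult: "bounded_linear (omult a)"
  using linear_omult linear_conv_bounded_linear by blast

lemma deriv_omult: "(h has_derivative L) F \<Longrightarrow> ((\<lambda>w. omult a (h w)) has_derivative (\<lambda>w. omult a (L w))) F"
  by (rule bounded_linear.has_derivative[OF bl_omult])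

lemma pder_fI:
  assumes oD: "open D" and C1: "stem_C1 D F" and ind: "induces D F f" and N: "(I, J) \<in> Nset"
    and vE: "v \<in> Eset D"
  shows "pder (fI f I J) k v = pder (F 0) k v + omult I (pder (F 1) k v) + omult J (pder (F 2) k v)
      + omult (omult I J) (pder (F 3) k v)"
proof -
  have "\<forall>i. \<exists>L. (F i has_derivative L) (at v)"
    using C1 vE by (auto simp: stem_C1_def C1_on_def)
  then obtain L where L: "\<And>i. (F i has_derivative L i) (at v)" by metis
  let ?g = "\<lambda>w. F 0 w + omult I (F 1 w) + omult J (F 2 w) + omult (omult I J) (F 3 w)"
  have "(?g has_derivative (\<lambda>w. L 0 w + omult I (L 1 w) + omult J (L 2 w) + omult (omult I J) (L 3 w))) (at v)"
    by (intro has_derivative_add deriv_omult L)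
  moreover have "\<And>w. w \<in> Eset D \<Longrightarrow> ?g w = fI f I J w"
    using ind N by (auto simp: induces_def fI_def)
  ultimately have "(fI f I J has_derivative (\<lambda>w. L 0 w + omult I (L 1 w) + omult J (L 2 w) + omult (omult I J) (L 3 w))) (at v)"
    using has_derivative_transform_within_open[OF _ open_E[OF oD] vE] by blast
  hence "pder (fI f I J) k v = L 0 (axis k 1) + omult I (L 1 (axis k 1)) + omult J (L 2 (axis k 1)) + omult (omult I J) (L 3 (axis k 1))"
    by (rule pder_eq)
  moreover have "\<And>i. pder (F i) k v = L i (axis k 1)" by (rule pder_eq[OF L])
  ultimately show ?thesis by simp
qed


definition sv :: "(4 \<Rightarrow> real) \<Rightarrow> bool" where
  "sv s \<longleftrightarrow> s 0 = 1 \<and> (\<forall>i. s i = 1 \<or> s i = -1)"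

definition dg :: "(4 \<Rightarrow> real) \<Rightarrow> real^4^4" where
  "dg s = (\<chi> i j. if i = j then s i else 0)"

lemma sv_sq: "sv s \<Longrightarrow> s i * s i = 1"
  unfolding sv_def by (metis mult_1_right mult_minus1_right minus_minus)

lemma dg_mult: "dg s *v v = (\<chi> i. s i * v$i)"
  by (simp add: dg_def matrix_vector_mult_def vec_eq_iff sum4 all4)

lemma dg_dg: "sv s \<Longrightarrow> dg s *v (dg s *v v) = v"
  by (simp add: dg_mult vec_eq_iff sv_sq mult.assoc[symmetric])

lemma dg_O3: assumes "sv s" shows "dg s \<in> O3"
proof -
  have "transpose (dg s) ** dg s = mat 1"
    using assms by (simp add: dg_def matrix_matrix_mult_def transpose_def mat_def vec_eq_iff
        sum4 all4 sv_sq)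
  moreover have "dg s ** transpose (dg s) = mat 1"
    using assms by (simp add: dg_def matrix_matrix_mult_def transpose_def mat_def vec_eq_iff
        sum4 all4 sv_sq)
  moreover have "dg s *v axis 0 1 = axis 0 1"
    using assms by (auto simp: dg_mult axis_def vec_eq_iff sv_def)
  ultimately show ?thesis by (simp add: O3_def orthogonal_matrix_def)
qed

lemma dg_E: assumes "sv s" "v \<in> Eset D" shows "dg s *v v \<in> Eset D"
proof -
  have "(s i * x)\<^sup>2 = x\<^sup>2" for i x using sv_sq[OF assms(1), of i]
    by (simp add: power2_eq_square algebra_simps)
  thus ?thesis using assms by (simp add: Eset_def dg_mult sv_def)
qed

lemma dg_equiv: assumes "o3_stem D F" "sv s" "v \<in> Eset D"
  shows "F a (dg s *v v) = s a *\<^sub>R F a v"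
proof -
  have "F a (dg s *v v) = (\<Sum>j\<in>UNIV. (dg s $ a $ j) *\<^sub>R F j v)"
    using assms(1) dg_O3[OF assms(2)] assms(3) by (simp add: o3_stem_def)
  also have "\<dots> = (\<Sum>j\<in>UNIV. if a = j then s a *\<^sub>R F j v else 0)"
    by (rule sum.cong) (auto simp: dg_def)
  also have "\<dots> = s a *\<^sub>R F a v" by simp
  finally show ?thesis .
qed

lemma pder_dg:
  assumes oD: "open D" and st: "o3_stem D F" and C1: "stem_C1 D F" and s: "sv s" and vE: "v \<in> Eset D"
  shows "pder (F a) b (dg s *v v) = (s a * s b) *\<^sub>R pder (F a) b v"
proof -
  obtain L where L: "(F a has_derivative L) (at v)"
    using C1 vE by (auto simp: stem_C1_def C1_on_def)
  have "((F a \<circ> (\<lambda>u. dg s *v u)) has_derivative (L \<circ> (\<lambda>u. dg s *v u))) (at (dg s *v v))"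
    by (rule diff_chain_at) (auto intro: bounded_linear_imp_has_derivative simp: dg_dg[OF s] L)
  hence "((\<lambda>u. s a *\<^sub>R F a (dg s *v u)) has_derivative (\<lambda>u. s a *\<^sub>R L (dg s *v u))) (at (dg s *v v))"
    using has_derivative_scaleR_right by (simp add: comp_def)
  moreover have "\<And>u. u \<in> Eset D \<Longrightarrow> s a *\<^sub>R F a (dg s *v u) = F a u"
  proof -
    fix u assume uE: "u \<in> Eset D"
    have "F a (dg s *v (dg s *v u)) = s a *\<^sub>R F a (dg s *v u)"
      by (rule dg_equiv[OF st s dg_E[OF s uE]])
    thus "s a *\<^sub>R F a (dg s *v u) = F a u" by (simp add: dg_dg[OF s])
  qed
  ultimately have "(F a has_derivative (\<lambda>u. s a *\<^sub>R L (dg s *v u))) (at (dg s *v v))"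
    using has_derivative_transform_within_open[OF _ open_E[OF oD] dg_E[OF s vE]] by blast
  hence "pder (F a) b (dg s *v v) = s a *\<^sub>R L (dg s *v axis b 1)" by (rule pder_eq)
  also have "dg s *v axis b 1 = s b *\<^sub>R axis b 1"
    by (auto simp: dg_mult axis_def vec_eq_iff)
  also have "s a *\<^sub>R L (s b *\<^sub>R axis b 1) = (s a * s b) *\<^sub>R L (axis b 1)"
    using linear_scale[OF has_derivative_linear[OF L]] by simp
  finally show ?thesis using pder_eq[OF L] by simp
qed


lemma fourier:
  fixes c y1 y2 y3 z12 z13 z23 :: "'a::real_inner"
  assumes h: "\<And>s1 s2 s3. s1 \<in> {1,-1} \<Longrightarrow> s2 \<in> {1,-1} \<Longrightarrow> s3 \<in> {1,-1} \<Longrightarrow>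
    c + s1 *\<^sub>R y1 + s2 *\<^sub>R y2 + s3 *\<^sub>R y3 + (s1 * s2) *\<^sub>R z12 + (s1 * s3) *\<^sub>R z13 + (s2 * s3) *\<^sub>R z23 = 0"
  shows "c = 0 \<and> y1 = 0 \<and> y2 = 0 \<and> y3 = 0 \<and> z12 = 0 \<and> z13 = 0 \<and> z23 = 0"
proof -
  have r: "inner c w = 0 \<and> inner y1 w = 0 \<and> inner y2 w = 0 \<and> inner y3 w = 0 \<and> inner z12 w = 0
     \<and> inner z13 w = 0 \<and> inner z23 w = 0" for w
  proof -
    have g: "inner c w + s1 * inner y1 w + s2 * inner y2 w + s3 * inner y3 w + (s1 * s2) * inner z12 w
       + (s1 * s3) * inner z13 w + (s2 * s3) * inner z23 w = 0"
      if "s1 \<in> {1,-1}" "s2 \<in> {1,-1}" "s3 \<in> {1,-1}" for s1 s2 s3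
    proof -
      have "inner (c + s1 *\<^sub>R y1 + s2 *\<^sub>R y2 + s3 *\<^sub>R y3 + (s1 * s2) *\<^sub>R z12 + (s1 * s3) *\<^sub>R z13 + (s2 * s3) *\<^sub>R z23) w = 0"
        using h[OF that] by simp
      thus ?thesis by (simp add: inner_add_left)
    qed
    note g1 = g[of 1 1 1] and g2 = g[of "-1" 1 1] and g3 = g[of 1 "-1" 1] and g4 = g[of 1 1 "-1"]
      and g5 = g[of "-1" "-1" 1] and g6 = g[of "-1" 1 "-1"] and g7 = g[of 1 "-1" "-1"] and g8 = g[of "-1" "-1" "-1"]
    show ?thesis using g1 g2 g3 g4 g5 g6 g7 g8 by simp
  qed
  show ?thesis using r[of c] r[of y1] r[of y2] r[of y3] r[of z12] r[of z13] r[of z23] by simp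
qed

lemma dbl0: "(x::'a::real_vector) + x = 0 \<Longrightarrow> x = 0"
  by (metis scaleR_2 scaleR_eq_0_iff zero_neq_numeral)

lemma pm: "(a::'a::real_vector) + b = 0 \<Longrightarrow> b - a = 0 \<Longrightarrow> a = 0 \<and> b = 0"
  by (metis dbl0 eq_iff_diff_eq_0 add.right_neutral)

context nI begin

definition Tf :: "(4 \<Rightarrow> 4 \<Rightarrow> oct) \<Rightarrow> oct" where
  "Tf x = (x 0 0 + omult I (x 0 1) + omult J (x 0 2) + omult K (x 0 3))
     + omult I (x 1 0 + omult I (x 1 1) + omult J (x 1 2) + omult K (x 1 3))
     + omult J (x 2 0 + omult I (x 2 1) + omult J (x 2 2) + omult K (x 2 3))
     + omult K (x 3 0 + omult I (x 3 1) + omult J (x 3 2) + omult K (x 3 3))"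

lemma JI_y: "omult J (omult I y) = - omult I (omult J y)"
  using lin_alt[of J I y] IJanti by (simp add: add.commute eq_neg_iff_add_eq_0)
lemma KI_y: "omult K (omult I y) = - omult I (omult K y)"
  using lin_alt[of K I y] IKanti by (simp add: add.commute eq_neg_iff_add_eq_0)
lemma KJ_y: "omult K (omult J y) = - omult J (omult K y)"
  using lin_alt[of K J y] JKanti by (simp add: add.commute eq_neg_iff_add_eq_0)

lemma Tf_decomp: "Tf x = (x 0 0 - x 1 1 - x 2 2 - x 3 3) + omult I (x 1 0 + x 0 1) + omult J (x 2 0 + x 0 2)
   + omult K (x 3 0 + x 0 3) + omult I (omult J (x 1 2 - x 2 1)) + omult I (omult K (x 1 3 - x 3 1))
   + omult J (omult K (x 2 3 - x 3 2))"
  unfolding Tf_def using sph_sq[OF I] sph_sq[OF J] sph_sq[OF K]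
  by (simp add: olin JI_y KI_y KJ_y algebra_simps)

lemma Dbar_Tf:
  assumes oD: "open D" and C1: "stem_C1 D F" and ind: "induces D F f" and vE: "v \<in> Eset D"
  shows "DbarI f I J v = Tf (\<lambda>k j. pder (F j) k v)"
  unfolding DbarI_def Tf_def pder_fI[OF oD C1 ind N vE] K_def ..

lemma Tf_scaled:
  assumes s: "sv s"
  shows "Tf (\<lambda>k j. (s j * s k) *\<^sub>R x k j) =
    (x 0 0 - x 1 1 - x 2 2 - x 3 3) + s 1 *\<^sub>R omult I (x 1 0 + x 0 1) + s 2 *\<^sub>R omult J (x 2 0 + x 0 2)
   + s 3 *\<^sub>R omult K (x 3 0 + x 0 3) + (s 1 * s 2) *\<^sub>R omult I (omult J (x 1 2 - x 2 1))
   + (s 1 * s 3) *\<^sub>R omult I (omult K (x 1 3 - x 3 1))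
   + (s 2 * s 3) *\<^sub>R omult J (omult K (x 2 3 - x 3 2))"
proof -
  have s0: "s 0 = 1" using s by (simp add: sv_def)
  have sq: "\<And>i. s i * s i = 1" using sv_sq[OF s] .
  show ?thesis unfolding Tf_decomp
    by (simp add: olin s0 sq scaleR_right_diff_distrib scaleR_right_distrib mult.commute)
qed

end


context nI begin
lemma inj_I: "omult I y = 0 \<Longrightarrow> y = 0" using sph_sq[OF I, of y] by simp
lemma inj_J: "omult J y = 0 \<Longrightarrow> y = 0" using sph_sq[OF J, of y] by simp
lemma inj_K: "omult K y = 0 \<Longrightarrow> y = 0" using sph_sq[OF K, of y] by simp
end

lemma opoint_HI: "opoint I J v \<in> HI I J"
  unfolding opoint_def HI_def by (intro span_add span_scale span_base) auto

theorem mainTheorem9: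
  fixes D :: "(real \<times> real) set"
    and F :: "4 \<Rightarrow> real ^ 4 \<Rightarrow> oct"
    and f :: "oct \<Rightarrow> oct"
  assumes "open D" and "D \<noteq> {}"
    and "\<forall>x0 x1. (x0, x1) \<in> D \<longrightarrow> (x0, - x1) \<in> D"
    and "connected (OmegaD D)"
    and "o3_stem D F" and "stem_C1 D F" and "induces D F f"
  shows "slice_fueter_regular D f \<longleftrightarrow>
    (\<exists>(I, J) \<in> Nset. \<forall>v. opoint I J v \<in> OmegaD D \<inter> HI I J \<longrightarrow> DbarI f I J v = 0)"
proof
  assume "slice_fueter_regular D f"
  then obtain G where Gst: "o3_stem D G" and GC: "stem_C1 D G" and Gind: "induces D G f"
    and Gfs: "fueter_system D G" by (auto simp: slice_fueter_regular_def)
  define I0 where "I0 = (qmk 0 1 0 0, 0::quat)"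
  define J0 where "J0 = (qmk 0 0 1 0, 0::quat)"
  have N0: "(I0, J0) \<in> Nset"
  proof -
    have "I0 \<in> Sph" unfolding I0_def Sph_def by (simp add: oexp)
    moreover have "J0 \<in> Sph" unfolding J0_def Sph_def by (simp add: oexp)
    moreover have "inner I0 J0 = 0" by (simp add: inner_oct I0_def J0_def)
    ultimately show ?thesis by (simp add: Nset_def)
  qed
  interpret nI I0 J0 by unfold_locales (rule N0)
  have "\<forall>v. opoint I0 J0 v \<in> OmegaD D \<inter> HI I0 J0 \<longrightarrow> DbarI f I0 J0 v = 0"
  proof (intro allI impI)
    fix v assume "opoint I0 J0 v \<in> OmegaD D \<inter> HI I0 J0"
    hence vE: "v \<in> Eset D" using opoint_Omega[OF assms(3)] by blast
    define X where "X = (\<lambda>k j. pder (G j) k v)"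
    define s1 where "s1 = (\<lambda>i::4. if i = 1 then -1 else (1::real))"
    define s2 where "s2 = (\<lambda>i::4. if i = 2 then -1 else (1::real))"
    define s3 where "s3 = (\<lambda>i::4. if i = 3 then -1 else (1::real))"
    have sv1: "sv s1" by (simp add: sv_def s1_def)
    have sv2: "sv s2" by (simp add: sv_def s2_def)
    have sv3: "sv s3" by (simp add: sv_def s3_def)
    have f0: "X 0 0 - X 1 1 - X 2 2 - X 3 3 = 0"
      and f1: "X 1 0 + X 0 1 - X 3 2 + X 2 3 = 0"
      and f2: "X 2 0 + X 3 1 + X 0 2 - X 1 3 = 0"
      and f3: "X 3 0 - X 2 1 + X 1 2 + X 0 3 = 0"
      using Gfs vE by (simp_all add: fueter_system_def X_def)
    have h1: "pder (G 0) 1 (dg s1 *v v) + pder (G 1) 0 (dg s1 *v v) - pder (G 2) 3 (dg s1 *v v) + pder (G 3) 2 (dg s1 *v v) = 0"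
      using bspec[OF Gfs[unfolded fueter_system_def] dg_E[OF sv1 vE]] by blast
    have g1: "- X 1 0 - X 0 1 - X 3 2 + X 2 3 = 0"
      using h1 unfolding pder_dg[OF assms(1) Gst GC sv1 vE] by (simp add: X_def s1_def)
    have h2: "pder (G 0) 2 (dg s2 *v v) + pder (G 1) 3 (dg s2 *v v) + pder (G 2) 0 (dg s2 *v v) - pder (G 3) 1 (dg s2 *v v) = 0"
      using bspec[OF Gfs[unfolded fueter_system_def] dg_E[OF sv2 vE]] by blast
    have g2: "- X 2 0 + X 3 1 - X 0 2 - X 1 3 = 0"
      using h2 unfolding pder_dg[OF assms(1) Gst GC sv2 vE] by (simp add: X_def s2_def)
    have h3: "pder (G 0) 3 (dg s3 *v v) - pder (G 1) 2 (dg s3 *v v) + pder (G 2) 1 (dg s3 *v v) + pder (G 3) 0 (dg s3 *v v) = 0"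
      using bspec[OF Gfs[unfolded fueter_system_def] dg_E[OF sv3 vE]] by blast
    have g3: "- X 3 0 - X 2 1 + X 1 2 - X 0 3 = 0"
      using h3 unfolding pder_dg[OF assms(1) Gst GC sv3 vE] by (simp add: X_def s3_def)
    have a1: "X 1 0 + X 0 1 = 0 \<and> X 2 3 - X 3 2 = 0"
      by (rule pm) (use f1 g1 in \<open>simp_all add: algebra_simps\<close>)
    have a2: "X 2 0 + X 0 2 = 0 \<and> X 3 1 - X 1 3 = 0"
      by (rule pm) (use f2 g2 in \<open>simp_all add: algebra_simps\<close>)
    have a3: "X 3 0 + X 0 3 = 0 \<and> X 1 2 - X 2 1 = 0"
      by (rule pm) (use f3 g3 in \<open>simp_all add: algebra_simps\<close>)
    have b13: "X 1 3 - X 3 1 = 0" using a2 by (simp add: algebra_simps)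
    have "DbarI f I0 J0 v = Tf X"
      unfolding X_def by (rule Dbar_Tf[OF assms(1) GC Gind vE])
    also have "\<dots> = 0" unfolding Tf_decomp using f0 a1 a2 a3 b13 by simp
    finally show "DbarI f I0 J0 v = 0" .
  qed
  thus "\<exists>(I, J) \<in> Nset. \<forall>v. opoint I J v \<in> OmegaD D \<inter> HI I J \<longrightarrow> DbarI f I J v = 0"
    using N0 by blast
next
  assume "\<exists>(I, J) \<in> Nset. \<forall>v. opoint I J v \<in> OmegaD D \<inter> HI I J \<longrightarrow> DbarI f I J v = 0"
  then obtain I J where N: "(I, J) \<in> Nset"
    and H: "\<forall>v. opoint I J v \<in> OmegaD D \<inter> HI I J \<longrightarrow> DbarI f I J v = 0" by blast
  interpret nI I J by unfold_locales (rule N)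
  have "fueter_system D F"
    unfolding fueter_system_def
  proof (intro ballI)
    fix v assume vE: "v \<in> Eset D"
    define X where "X = (\<lambda>k j. pder (F j) k v)"
    have key: "(X 0 0 - X 1 1 - X 2 2 - X 3 3) + s1 *\<^sub>R omult I (X 1 0 + X 0 1) + s2 *\<^sub>R omult J (X 2 0 + X 0 2)
      + s3 *\<^sub>R omult K (X 3 0 + X 0 3) + (s1 * s2) *\<^sub>R omult I (omult J (X 1 2 - X 2 1))
      + (s1 * s3) *\<^sub>R omult I (omult K (X 1 3 - X 3 1))
      + (s2 * s3) *\<^sub>R omult J (omult K (X 2 3 - X 3 2)) = 0"
      if "s1 \<in> {1,-1}" "s2 \<in> {1,-1}" "s3 \<in> {1,-1}" for s1 s2 s3
    proof -
      define s where "s = (\<lambda>i::4. if i = 1 then s1 else if i = 2 then s2 else if i = 3 then s3 else 1)"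
      have sv: "sv s" using that by (auto simp: sv_def s_def)
      have wE: "dg s *v v \<in> Eset D" by (rule dg_E[OF sv vE])
      have "opoint I J (dg s *v v) \<in> OmegaD D \<inter> HI I J"
        using opoint_Omega[OF assms(3)] wE opoint_HI by blast
      hence "0 = DbarI f I J (dg s *v v)" using H by simp
      also have "\<dots> = Tf (\<lambda>k j. pder (F j) k (dg s *v v))"
        by (rule Dbar_Tf[OF assms(1) assms(6) assms(7) wE])
      also have "\<dots> = Tf (\<lambda>k j. (s j * s k) *\<^sub>R X k j)"
        by (simp add: pder_dg[OF assms(1) assms(5) assms(6) sv vE] X_def)
      also have "\<dots> = (X 0 0 - X 1 1 - X 2 2 - X 3 3) + s1 *\<^sub>R omult I (X 1 0 + X 0 1) + s2 *\<^sub>R omult J (X 2 0 + X 0 2)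
        + s3 *\<^sub>R omult K (X 3 0 + X 0 3) + (s1 * s2) *\<^sub>R omult I (omult J (X 1 2 - X 2 1))
        + (s1 * s3) *\<^sub>R omult I (omult K (X 1 3 - X 3 1))
        + (s2 * s3) *\<^sub>R omult J (omult K (X 2 3 - X 3 2))"
        unfolding Tf_scaled[OF sv] by (simp add: s_def)
      finally show ?thesis by simp
    qed
    have z: "X 0 0 - X 1 1 - X 2 2 - X 3 3 = 0 \<and> omult I (X 1 0 + X 0 1) = 0 \<and> omult J (X 2 0 + X 0 2) = 0
      \<and> omult K (X 3 0 + X 0 3) = 0 \<and> omult I (omult J (X 1 2 - X 2 1)) = 0
      \<and> omult I (omult K (X 1 3 - X 3 1)) = 0 \<and> omult J (omult K (X 2 3 - X 3 2)) = 0"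
      by (rule fourier) (rule key)
    have c0: "X 0 0 - X 1 1 - X 2 2 - X 3 3 = 0" using z by blast
    have A1: "X 1 0 + X 0 1 = 0" using z inj_I by blast
    have A2: "X 2 0 + X 0 2 = 0" using z inj_J by blast
    have A3: "X 3 0 + X 0 3 = 0" using z inj_K by blast
    have B12: "X 1 2 - X 2 1 = 0" using z inj_I inj_J by blast
    have B13: "X 1 3 - X 3 1 = 0" using z inj_I inj_K by blast
    have B23: "X 2 3 - X 3 2 = 0" using z inj_J inj_K by blast
    have e1: "X 1 0 + X 0 1 - X 3 2 + X 2 3 = (X 1 0 + X 0 1) + (X 2 3 - X 3 2)" by (simp add: algebra_simps)
    have e2: "X 2 0 + X 3 1 + X 0 2 - X 1 3 = (X 2 0 + X 0 2) - (X 1 3 - X 3 1)" by (simp add: algebra_simps)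
    have e3: "X 3 0 - X 2 1 + X 1 2 + X 0 3 = (X 3 0 + X 0 3) + (X 1 2 - X 2 1)" by (simp add: algebra_simps)
    show "pder (F 0) 0 v - pder (F 1) 1 v - pder (F 2) 2 v - pder (F 3) 3 v = 0 \<and>
      pder (F 0) 1 v + pder (F 1) 0 v - pder (F 2) 3 v + pder (F 3) 2 v = 0 \<and>
      pder (F 0) 2 v + pder (F 1) 3 v + pder (F 2) 0 v - pder (F 3) 1 v = 0 \<and>
      pder (F 0) 3 v - pder (F 1) 2 v + pder (F 2) 1 v + pder (F 3) 0 v = 0"
      using c0 e1 e2 e3 A1 A2 A3 B12 B13 B23 unfolding X_def by simp
  qed
  thus "slice_fueter_regular D f"
    using assms(5,6,7) unfolding slice_fueter_regular_def by blast
qed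


end
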